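(* Let $\sigma>0$, $T>0$, and let $x(t)=\sigma w(t)$, where $w$ is a standard Wiener process (i.e. the solution of $\mathrm{d}x=\sigma\,\mathrm{d}w$, $x(0)=0$). Let $h>0$ be such that $N=T/h$ is a positive integer, let $M\ge1$ be an integer and $B=MN$. Let $x_1,\dots,x_M$ be independent copies of $x$ and define $\hat V_M(h)=\frac1M\sum_{i=1}^M\sum_{k=0}^{N-1}h\,x_i^2(kh)$, $V_T=\int_0^T\mathbb{E}[x^2(t)]\,\mathrm{d}t$ and $\mathrm{MSE}_T(h,B)=\mathbb{E}[(\hat V_M(h)-V_T)^2]$. Then $$\mathrm{MSE}_T(h,B)=\frac{\sigma^4T^2}{4}h^2+\frac{\sigma^4T^5}{3}\cdot\frac{1}{hB}+\frac{\sigma^4T^2(-2T^2+2hT-h^2)}{3B}.$$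
   Context: This is the marginally stable case (drift coefficient $a=0$) of Monte-Carlo evaluation of the undiscounted cost $\int_0^T x^2(t)\,dt$ over a finite horizon $T$ using $M$ episodes each sampled at $N=T/h$ equally spaced times, with data budget $B=MN$. *)

theory Defs
  imports "HOL-Probability.Probability"
begin

definition wiener_process :: "'a measure \<Rightarrow> (real \<Rightarrow> 'a \<Rightarrow> real) \<Rightarrow> bool" where
  "wiener_process P W \<longleftrightarrow>
     prob_space P \<and>
     (\<forall>t. W t \<in> borel_measurable P) \<and>
     (AE \<omega> in P. W 0 \<omega> = 0) \<and>
     (AE \<omega> in P. continuous_on {0..} (\<lambda>t. W t \<omega>)) \<and>
     (\<forall>s t. 0 \<le> s \<and> s < t \<longrightarrow>
        distributed P lborel (\<lambda>\<omega>. W t \<omega> - W s \<omega>)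
          (\<lambda>x. ennreal (normal_density 0 (sqrt (t - s)) x))) \<and>
     (\<forall>ts. sorted_wrt (<) ts \<and> (\<forall>t\<in>set ts. 0 \<le> t) \<longrightarrow>
        prob_space.indep_vars P (\<lambda>_. borel)
          (\<lambda>k \<omega>. W (ts ! Suc k) \<omega> - W (ts ! k) \<omega>) {..<length ts - 1})"

end

theory Submission imports Defs begin
lemma (in prob_space) normal_mom:
  assumes D: "distributed M lborel X (\<lambda>x. ennreal (normal_density 0 s x))" and s: "s > 0"
  shows "integrable M (\<lambda>\<omega>. X \<omega> ^ k)"
    and "expectation (\<lambda>\<omega>. X \<omega> ^ (2*k)) = fact (2 * k) / ((2 / s\<^sup>2)^k * fact k)"
    and "expectation (\<lambda>\<omega>. X \<omega> ^ (2*k+1)) = 0"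
proof -
  have "integrable lborel (\<lambda>x. normal_density 0 s x * x ^ k)"
    using integrable_normal_moment[where \<mu>=0 and \<sigma>=s and k=k] s by simp
  then show "integrable M (\<lambda>\<omega>. X \<omega> ^ k)"
    using distributed_integrable[OF D, of "\<lambda>x. x ^ k"] by simp
  show "expectation (\<lambda>\<omega>. X \<omega> ^ (2*k)) = fact (2 * k) / ((2 / s\<^sup>2)^k * fact k)"
    using distributed_integral[OF D, of "\<lambda>x. x ^ (2*k)"] integral_normal_moment_even[where \<mu>=0 and \<sigma>=s and k=k] s by simp
  show "expectation (\<lambda>\<omega>. X \<omega> ^ (2*k+1)) = 0"
    using distributed_integral[OF D, of "\<lambda>x. x ^ (2*k+1)"] integral_normal_moment_odd[where \<mu>=0 and \<sigma>=s and k=k] s by simp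
qed

lemma (in prob_space) normal_mom_spec:
  assumes D: "distributed M lborel X (\<lambda>x. ennreal (normal_density 0 (sqrt t) x))" and s: "t > 0"
  shows "expectation (\<lambda>\<omega>. X \<omega> ^ 2) = t" "expectation (\<lambda>\<omega>. X \<omega> ^ 4) = 3 * t^2"
    "expectation (\<lambda>\<omega>. X \<omega> ^ 3) = 0" "expectation (\<lambda>\<omega>. X \<omega>) = 0"
  using normal_mom(2)[OF D _, of 1] normal_mom(2)[OF D _, of 2] normal_mom(3)[OF D _, of 1] normal_mom(3)[OF D _, of 0] s
  by (simp_all add: fact_numeral power2_eq_square)


lemma wp_facts:
  assumes "wiener_process P W"
  shows "prob_space P" "\<And>t. W t \<in> borel_measurable P" "AE \<omega> in P. W 0 \<omega> = 0"
    "\<And>s t. 0 \<le> s \<Longrightarrow> s < t \<Longrightarrow> distributed P lborel (\<lambda>\<omega>. W t \<omega> - W s \<omega>)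
          (\<lambda>x. ennreal (normal_density 0 (sqrt (t - s)) x))"
    "\<And>ts. sorted_wrt (<) ts \<Longrightarrow> (\<forall>t\<in>set ts. 0 \<le> t) \<Longrightarrow>
        prob_space.indep_vars P (\<lambda>_. borel)
          (\<lambda>k \<omega>. W (ts ! Suc k) \<omega> - W (ts ! k) \<omega>) {..<length ts - 1}"
  using assms unfolding wiener_process_def by auto

lemma (in prob_space) wp_mom:
  assumes W: "wiener_process M W" and t: "t \<ge> 0"
  shows "integrable M (\<lambda>\<omega>. W t \<omega> ^ k)"
    "expectation (\<lambda>\<omega>. W t \<omega> ^ 2) = t" "expectation (\<lambda>\<omega>. W t \<omega> ^ 4) = 3 * t^2"
proof -
  note wf = wp_facts[OF W]
  have ae: "AE \<omega> in M. W t \<omega> = W t \<omega> - W 0 \<omega>" using wf(3) by auto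
  have "integrable M (\<lambda>\<omega>. W t \<omega> ^ k) \<and> expectation (\<lambda>\<omega>. W t \<omega> ^ 2) = t \<and> expectation (\<lambda>\<omega>. W t \<omega> ^ 4) = 3 * t^2"
  proof (cases "t = 0")
    case True
    have ae0: "AE \<omega> in M. W t \<omega> = 0" using wf(3) True by auto
    have i1: "integrable M (\<lambda>\<omega>. W t \<omega> ^ k)"
      by (rule integrable_cong_AE_imp[where g="\<lambda>_. 0 ^ k"]) (use ae0 wf(2) in auto)
    have "expectation (\<lambda>\<omega>. W t \<omega> ^ 2) = expectation (\<lambda>\<omega>. 0)"
      by (rule integral_cong_AE) (use ae0 wf(2) in auto)
    moreover have "expectation (\<lambda>\<omega>. W t \<omega> ^ 4) = expectation (\<lambda>\<omega>. 0)"
      by (rule integral_cong_AE) (use ae0 wf(2) in auto)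
    ultimately show ?thesis using i1 True by simp
  next
    case False
    then have tp: "t > 0" using t by simp
    have D: "distributed M lborel (\<lambda>\<omega>. W t \<omega> - W 0 \<omega>) (\<lambda>x. ennreal (normal_density 0 (sqrt t) x))"
      using wf(4)[of 0 t] tp by simp
    have e: "\<And>n. expectation (\<lambda>\<omega>. W t \<omega> ^ n) = expectation (\<lambda>\<omega>. (W t \<omega> - W 0 \<omega>) ^ n)"
      by (rule integral_cong_AE) (use ae wf(2) in auto)
    have "integrable M (\<lambda>\<omega>. (W t \<omega> - W 0 \<omega>) ^ k)"
      using normal_mom(1)[OF D] tp by simp
    then have i1: "integrable M (\<lambda>\<omega>. W t \<omega> ^ k)"
      by (rule integrable_cong_AE_imp) (use ae wf(2) in auto)
    show ?thesis using i1 e normal_mom_spec[OF D tp] by simp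
  qed
  then show "integrable M (\<lambda>\<omega>. W t \<omega> ^ k)"
    "expectation (\<lambda>\<omega>. W t \<omega> ^ 2) = t" "expectation (\<lambda>\<omega>. W t \<omega> ^ 4) = 3 * t^2" by auto
qed


lemma (in prob_space) indep2_mom:
  fixes Z :: "nat \<Rightarrow> 'a \<Rightarrow> real"
  assumes ind: "indep_vars (\<lambda>_. borel) Z {..<2::nat}"
    and i0: "integrable M (\<lambda>\<omega>. Z 0 \<omega> ^ a)" and i1: "integrable M (\<lambda>\<omega>. Z 1 \<omega> ^ b)"
  shows "expectation (\<lambda>\<omega>. Z 0 \<omega> ^ a * Z 1 \<omega> ^ b) = expectation (\<lambda>\<omega>. Z 0 \<omega> ^ a) * expectation (\<lambda>\<omega>. Z 1 \<omega> ^ b)"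
    "integrable M (\<lambda>\<omega>. Z 0 \<omega> ^ a * Z 1 \<omega> ^ b)"
proof -
  define Y where "Y = (\<lambda>k::nat. if k = 0 then (\<lambda>x::real. x ^ a) else (\<lambda>x. x ^ b))"
  have ind2: "indep_vars (\<lambda>_. borel) (\<lambda>k \<omega>. Y k (Z k \<omega>)) {..<2}"
    by (rule indep_vars_compose2[OF ind]) (auto simp: Y_def)
  have ints: "\<And>k. k \<in> {..<2::nat} \<Longrightarrow> integrable M (\<lambda>\<omega>. Y k (Z k \<omega>))"
    using i0 i1 by (auto simp: Y_def less_2_cases_iff)
  have set2: "{..<2::nat} = {0, 1}" by auto
  show "expectation (\<lambda>\<omega>. Z 0 \<omega> ^ a * Z 1 \<omega> ^ b) = expectation (\<lambda>\<omega>. Z 0 \<omega> ^ a) * expectation (\<lambda>\<omega>. Z 1 \<omega> ^ b)"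
    using indep_vars_lebesgue_integral[OF _ ind2 ints] by (simp add: set2 Y_def)
  show "integrable M (\<lambda>\<omega>. Z 0 \<omega> ^ a * Z 1 \<omega> ^ b)"
    using indep_vars_integrable[OF _ ind2 ints] by (simp add: set2 Y_def)
qed

lemma (in prob_space) int_prod_sq:
  fixes X Y :: "'a \<Rightarrow> real"
  assumes "integrable M (\<lambda>\<omega>. X \<omega> ^ 4)" "integrable M (\<lambda>\<omega>. Y \<omega> ^ 4)"
    "X \<in> borel_measurable M" "Y \<in> borel_measurable M"
  shows "integrable M (\<lambda>\<omega>. X \<omega> ^ 2 * Y \<omega> ^ 2)"
proof (rule Bochner_Integration.integrable_bound[of _ "\<lambda>\<omega>. X \<omega> ^ 4 + Y \<omega> ^ 4"])
  show "integrable M (\<lambda>\<omega>. X \<omega> ^ 4 + Y \<omega> ^ 4)" using assms by auto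
  show "(\<lambda>\<omega>. X \<omega> ^ 2 * Y \<omega> ^ 2) \<in> borel_measurable M" using assms by auto
  show "AE x in M. norm (X x ^ 2 * Y x ^ 2) \<le> norm (X x ^ 4 + Y x ^ 4)"
  proof (rule AE_I2)
    fix x
    have "0 \<le> (X x ^ 2 - Y x ^ 2)^2" by simp
    then have "2 * (X x ^ 2 * Y x ^ 2) \<le> X x ^ 4 + Y x ^ 4"
      by (simp add: power2_diff power_mult[symmetric] power2_eq_square power4_eq_xxxx algebra_simps)
    moreover have "0 \<le> X x ^ 2 * Y x ^ 2" by simp
    moreover have "0 \<le> X x ^ 4 + Y x ^ 4" by (simp add: add_nonneg_nonneg)
    ultimately have h: "X x ^ 2 * Y x ^ 2 \<le> X x ^ 4 + Y x ^ 4" by linarith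
    show "norm (X x ^ 2 * Y x ^ 2) \<le> norm (X x ^ 4 + Y x ^ 4)" using h by simp
  qed
qed

lemma (in prob_space) wp_cross:
  assumes W: "wiener_process M W" and s: "0 \<le> s" "s \<le> t"
  shows "expectation (\<lambda>\<omega>. W s \<omega> ^ 2 * W t \<omega> ^ 2) = s * t + 2 * s^2"
proof -
  note wf = wp_facts[OF W]
  note [measurable] = wf(2)
  show ?thesis
  proof (cases "s = 0")
    case True
    have ae0: "AE \<omega> in M. W s \<omega> = 0" using wf(3) True by auto
    have "expectation (\<lambda>\<omega>. W s \<omega> ^ 2 * W t \<omega> ^ 2) = expectation (\<lambda>\<omega>. 0)"
      by (rule integral_cong_AE) (use ae0 in auto)
    then show ?thesis using True by simp
  next
    case False
    then have sp: "s > 0" using s by simp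
    show ?thesis
    proof (cases "s = t")
      case True
      have "(\<lambda>\<omega>. W s \<omega> ^ 2 * W t \<omega> ^ 2) = (\<lambda>\<omega>. W t \<omega> ^ 4)"
        using True by (simp add: fun_eq_iff flip: power_add)
      then show ?thesis using wp_mom(3)[OF W, of t] s True
        by (simp add: power2_eq_square)
    next
      case False
      then have st: "s < t" using s by simp
      define Z where "Z = (\<lambda>k \<omega>. W ([0, s, t] ! Suc k) \<omega> - W ([0, s, t] ! k) \<omega>)"
      have ind: "indep_vars (\<lambda>_. borel) Z {..<2}"
        using wf(5)[of "[0, s, t]"] sp st unfolding Z_def by (simp add: numeral_2_eq_2)
      have Z0: "Z 0 = (\<lambda>\<omega>. W s \<omega> - W 0 \<omega>)" and Z1: "Z 1 = (\<lambda>\<omega>. W t \<omega> - W s \<omega>)"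
        by (auto simp: Z_def)
      have D0: "distributed M lborel (Z 0) (\<lambda>x. ennreal (normal_density 0 (sqrt s) x))"
        using wf(4)[of 0 s] sp by (simp add: Z0)
      have D1: "distributed M lborel (Z 1) (\<lambda>x. ennreal (normal_density 0 (sqrt (t - s)) x))"
        unfolding Z1 using wf(4)[of s t] sp st by simp
      have ts: "t - s > 0" using st by simp
      have ae: "AE \<omega> in M. W s \<omega> ^ 2 * W t \<omega> ^ 2 =
          Z 0 \<omega> ^ 4 + 2 * (Z 0 \<omega> ^ 3 * Z 1 \<omega> ^ 1) + Z 0 \<omega> ^ 2 * Z 1 \<omega> ^ 2"
        using wf(3) by eventually_elim (simp add: Z_def power2_eq_square power3_eq_cube power4_eq_xxxx algebra_simps)
      have iZ0: "\<And>k. integrable M (\<lambda>\<omega>. Z 0 \<omega> ^ k)" using normal_mom(1)[OF D0] sp by simp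
      have iZ1: "\<And>k. integrable M (\<lambda>\<omega>. Z 1 \<omega> ^ k)" using normal_mom(1)[OF D1] ts by simp
      note a = indep2_mom[OF ind iZ0 iZ1]
      have "expectation (\<lambda>\<omega>. W s \<omega> ^ 2 * W t \<omega> ^ 2) =
          expectation (\<lambda>\<omega>. Z 0 \<omega> ^ 4 + 2 * (Z 0 \<omega> ^ 3 * Z 1 \<omega> ^ 1) + Z 0 \<omega> ^ 2 * Z 1 \<omega> ^ 2)"
        by (rule integral_cong_AE) (use ae in \<open>auto simp: Z_def\<close>)
      also have "\<dots> = expectation (\<lambda>\<omega>. Z 0 \<omega> ^ 4) + 2 * expectation (\<lambda>\<omega>. Z 0 \<omega> ^ 3 * Z 1 \<omega> ^ 1)
          + expectation (\<lambda>\<omega>. Z 0 \<omega> ^ 2 * Z 1 \<omega> ^ 2)"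
      proof -
        have i4: "integrable M (\<lambda>\<omega>. Z 0 \<omega> ^ 4)" by (rule iZ0)
        have i31: "integrable M (\<lambda>\<omega>. Z 0 \<omega> ^ 3 * Z 1 \<omega> ^ 1)" by (rule a(2))
        have i22: "integrable M (\<lambda>\<omega>. Z 0 \<omega> ^ 2 * Z 1 \<omega> ^ 2)" by (rule a(2))
        have e1: "expectation (\<lambda>\<omega>. Z 0 \<omega> ^ 4 + 2 * (Z 0 \<omega> ^ 3 * Z 1 \<omega> ^ 1) + Z 0 \<omega> ^ 2 * Z 1 \<omega> ^ 2)
          = expectation (\<lambda>\<omega>. Z 0 \<omega> ^ 4 + 2 * (Z 0 \<omega> ^ 3 * Z 1 \<omega> ^ 1)) + expectation (\<lambda>\<omega>. Z 0 \<omega> ^ 2 * Z 1 \<omega> ^ 2)"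
          by (rule Bochner_Integration.integral_add) (use i4 i31 i22 in auto)
        have e2: "expectation (\<lambda>\<omega>. Z 0 \<omega> ^ 4 + 2 * (Z 0 \<omega> ^ 3 * Z 1 \<omega> ^ 1))
          = expectation (\<lambda>\<omega>. Z 0 \<omega> ^ 4) + expectation (\<lambda>\<omega>. 2 * (Z 0 \<omega> ^ 3 * Z 1 \<omega> ^ 1))"
          by (rule Bochner_Integration.integral_add) (use i4 i31 in auto)
        have e3: "expectation (\<lambda>\<omega>. 2 * (Z 0 \<omega> ^ 3 * Z 1 \<omega> ^ 1)) = 2 * expectation (\<lambda>\<omega>. Z 0 \<omega> ^ 3 * Z 1 \<omega> ^ 1)"
          by (rule integral_mult_right_zero)
        show ?thesis unfolding e1 e2 e3 ..
      qed
      also have "\<dots> = 3 * s^2 + 0 + s * (t - s)"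
        using a(1)[of 3 1] a(1)[of 2 2] normal_mom_spec[OF D0 sp] normal_mom_spec[OF D1 ts] by simp
      finally show ?thesis by (simp add: algebra_simps power2_eq_square)
    qed
  qed
qed

lemma sum_k: "(\<Sum>k<N. real k) = real N * (real N - 1) / 2"
  by (induction N) (auto simp: field_simps)

lemma sum_k2: "(\<Sum>k<N. real k ^ 2) = real N * (real N - 1) * (2 * real N - 1) / 6"
  by (induction N) (auto simp: field_simps power2_eq_square)

lemma sum_min2: "(\<Sum>k<N. \<Sum>l<N. real (min k l) ^ 2) = real N * (real N - 1) * (real N ^ 2 - real N + 1) / 6"
proof (induction N)
  case 0 then show ?case by simp
next
  case (Suc N)
  have "(\<Sum>k<Suc N. \<Sum>l<Suc N. real (min k l) ^ 2) =
     (\<Sum>k<N. \<Sum>l<N. real (min k l) ^ 2) + 2 * (\<Sum>k<N. real k ^ 2) + real N ^ 2"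
    by (simp add: sum.distrib min_def)
  also have "\<dots> = real (Suc N) * (real (Suc N) - 1) * (real (Suc N) ^ 2 - real (Suc N) + 1) / 6"
    unfolding Suc.IH sum_k2 by (simp add: field_simps power2_eq_square)
  finally show ?case .
qed

lemma quad_sum:
  fixes f :: "nat \<Rightarrow> real" and g :: "nat \<Rightarrow> nat \<Rightarrow> real"
  shows "(\<Sum>i<M. \<Sum>j<M. \<Sum>k<N. \<Sum>l<N. f k * f l + (if i = j then g k l else 0))
     = real M ^ 2 * (\<Sum>k<N. f k) ^ 2 + real M * (\<Sum>k<N. \<Sum>l<N. g k l)"
proof -
  have a: "(\<Sum>i<M. \<Sum>j<M. \<Sum>k<N. \<Sum>l<N. f k * f l) = real M ^ 2 * (\<Sum>k<N. f k) ^ 2"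
    by (simp add: power2_eq_square sum_product)
  have b: "(\<Sum>i<M. \<Sum>j<M. \<Sum>k<N. \<Sum>l<N. (if i = j then g k l else 0)) = real M * (\<Sum>k<N. \<Sum>l<N. g k l)"
  proof -
    have r: "\<And>i j. (\<Sum>k<N. \<Sum>l<N. (if i = j then g k l else 0)) = (if i = j then (\<Sum>k<N. \<Sum>l<N. g k l) else 0)"
      by auto
    then show ?thesis by (simp only: r sum.delta') simp
  qed
  show ?thesis using a b by (simp add: sum.distrib)
qed


lemma (in prob_space) cross_indep:
  fixes W :: "nat \<Rightarrow> real \<Rightarrow> 'a \<Rightarrow> real"
  assumes wp: "\<And>i. i < K \<Longrightarrow> wiener_process M (W i)"
    and ind: "indep_vars (\<lambda>_. Pi\<^sub>M UNIV (\<lambda>_. borel)) (\<lambda>i \<omega>. \<lambda>t. W i t \<omega>) {..<K}"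
    and i: "i < K" "j < K" "i \<noteq> j" "0 \<le> a" "0 \<le> b"
  shows "expectation (\<lambda>\<omega>. W i a \<omega> ^ 2 * W j b \<omega> ^ 2) = a * b"
proof -
  have ind2: "indep_vars (\<lambda>_. Pi\<^sub>M UNIV (\<lambda>_. borel)) (\<lambda>i \<omega>. \<lambda>t. W i t \<omega>) {i, j}"
    by (rule indep_vars_subset[OF ind]) (use i in auto)
  define Y where "Y = (\<lambda>m (f::real\<Rightarrow>real). (f (if m = i then a else b)) ^ 2)"
  have ind3: "indep_vars (\<lambda>_. borel) (\<lambda>m \<omega>. Y m (\<lambda>t. W m t \<omega>)) {i, j}"
    by (rule indep_vars_compose2[OF ind2]) (unfold Y_def, measurable)
  have ints: "\<And>m. m \<in> {i, j} \<Longrightarrow> integrable M (\<lambda>\<omega>. Y m (\<lambda>t. W m t \<omega>))"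
    using wp_mom(1)[OF wp[of i] i(4), of 2] wp_mom(1)[OF wp[of j] i(5), of 2] i
    by (auto simp: Y_def)
  have "expectation (\<lambda>\<omega>. \<Prod>m\<in>{i, j}. Y m (\<lambda>t. W m t \<omega>)) = (\<Prod>m\<in>{i, j}. expectation (\<lambda>\<omega>. Y m (\<lambda>t. W m t \<omega>)))"
    by (rule indep_vars_lebesgue_integral[OF _ ind3 ints]) auto
  then show ?thesis
    using i wp_mom(2)[OF wp[of i] i(4)] wp_mom(2)[OF wp[of j] i(5)] by (simp add: Y_def)
qed

lemma integral_sum4:
  fixes f :: "nat \<Rightarrow> nat \<Rightarrow> nat \<Rightarrow> nat \<Rightarrow> 'a \<Rightarrow> real"
  assumes "\<And>i j k l. i \<in> A \<Longrightarrow> j \<in> B \<Longrightarrow> integrable M (f i j k l)"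
  shows "integral\<^sup>L M (\<lambda>\<omega>. \<Sum>i\<in>A. \<Sum>j\<in>B. \<Sum>k\<in>C. \<Sum>l\<in>D. f i j k l \<omega>)
    = (\<Sum>i\<in>A. \<Sum>j\<in>B. \<Sum>k\<in>C. \<Sum>l\<in>D. integral\<^sup>L M (f i j k l))"
  using assms by (simp add: Bochner_Integration.integral_sum Bochner_Integration.integrable_sum)

theorem corollary3p2:
  fixes P :: "'a measure"
    and W :: "nat \<Rightarrow> real \<Rightarrow> 'a \<Rightarrow> real"
    and \<sigma> T h :: real
    and N M :: nat
  assumes "prob_space P"
    and "\<And>i. i < M \<Longrightarrow> wiener_process P (W i)"
    and "prob_space.indep_vars P (\<lambda>_. Pi\<^sub>M UNIV (\<lambda>_. borel))
           (\<lambda>i \<omega>. \<lambda>t. W i t \<omega>) {..<M}"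
    and "\<sigma> > 0" and "T > 0" and "h > 0"
    and "N > 0" and "real N * h = T"
    and "M \<ge> 1"
  shows
    "(let x = (\<lambda>i t \<omega>. \<sigma> * W i t \<omega>);
          Vhat = (\<lambda>\<omega>. (1 / real M) *
                   (\<Sum>i<M. \<Sum>k<N. h * (x i (real k * h) \<omega>)\<^sup>2));
          V_T = integral {0..T} (\<lambda>t. prob_space.expectation P (\<lambda>\<omega>. (x 0 t \<omega>)\<^sup>2));
          B = real (M * N)
      in prob_space.expectation P (\<lambda>\<omega>. (Vhat \<omega> - V_T)\<^sup>2)
         = \<sigma>^4 * T\<^sup>2 / 4 * h\<^sup>2 + \<sigma>^4 * T^5 / 3 * (1 / (h * B))
           + \<sigma>^4 * T\<^sup>2 * (- 2 * T\<^sup>2 + 2 * h * T - h\<^sup>2) / (3 * B))"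
proof -
  interpret prob_space P by fact
  note wp = assms(2)
  have hp: "h > 0" and Mp: "M > 0" using assms by auto
  define c where "c k = real k * h" for k :: nat
  define G where "G \<omega> = (\<Sum>i<M. \<Sum>k<N. W i (c k) \<omega> ^ 2)" for \<omega>
  define a where "a = h * \<sigma>^2 / real M"
  define V where "V = \<sigma>^2 * T^2 / 2"
  have c0: "\<And>k. 0 \<le> c k" using hp by (simp add: c_def)
  have meas[measurable]: "\<And>i t. i < M \<Longrightarrow> W i t \<in> borel_measurable P" using wp_facts(2)[OF wp] by blast
  have Vhat_eq: "\<And>\<omega>. (1 / real M) * (\<Sum>i<M. \<Sum>k<N. h * (\<sigma> * W i (real k * h) \<omega>)\<^sup>2) = a * G \<omega>"
    by (simp add: a_def G_def c_def sum_distrib_left power_mult_distrib mult_ac)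
  have VT_eq: "integral {0..T} (\<lambda>t. expectation (\<lambda>\<omega>. (\<sigma> * W 0 t \<omega>)\<^sup>2)) = V"
  proof -
    have "\<And>t. t \<in> {0..T} \<Longrightarrow> expectation (\<lambda>\<omega>. (\<sigma> * W 0 t \<omega>)\<^sup>2) = \<sigma>^2 * t"
      using wp_mom(2)[OF wp[of 0]] Mp by (simp add: power_mult_distrib)
    then have "integral {0..T} (\<lambda>t. expectation (\<lambda>\<omega>. (\<sigma> * W 0 t \<omega>)\<^sup>2)) = integral {0..T} (\<lambda>t. \<sigma>^2 * t)"
      by (rule Henstock_Kurzweil_Integration.integral_cong)
    also have "\<dots> = \<sigma>^2 * ((T^2 - 0^2) / 2)"
      by (rule integral_unique, rule has_integral_mult_right, rule ident_has_integral) (use assms in auto)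
    finally show ?thesis by (simp add: V_def)
  qed
  have intF: "\<And>i j k l. i < M \<Longrightarrow> j < M \<Longrightarrow> integrable P (\<lambda>\<omega>. W i (c k) \<omega> ^ 2 * W j (c l) \<omega> ^ 2)"
    by (rule int_prod_sq) (auto intro: wp_mom(1)[OF wp c0])
  have EF: "\<And>i j k l. i < M \<Longrightarrow> j < M \<Longrightarrow> expectation (\<lambda>\<omega>. W i (c k) \<omega> ^ 2 * W j (c l) \<omega> ^ 2)
      = c k * c l + (if i = j then 2 * (h^2 * real (min k l) ^ 2) else 0)"
  proof -
    fix i j k l assume ij: "i < M" "j < M"
    show "expectation (\<lambda>\<omega>. W i (c k) \<omega> ^ 2 * W j (c l) \<omega> ^ 2)
      = c k * c l + (if i = j then 2 * (h^2 * real (min k l) ^ 2) else 0)"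
    proof (cases "i = j")
      case True
      show ?thesis
      proof (cases "k \<le> l")
        case True
        then have "c k \<le> c l" using hp by (simp add: c_def)
        then show ?thesis using wp_cross[OF wp[OF ij(1)] c0[of k] \<open>c k \<le> c l\<close>] True \<open>i = j\<close>
          by (simp add: c_def min_def power_mult_distrib mult_ac)
      next
        case False
        then have "c l \<le> c k" using hp by (simp add: c_def)
        moreover have "(\<lambda>\<omega>. W i (c k) \<omega> ^ 2 * W j (c l) \<omega> ^ 2) = (\<lambda>\<omega>. W i (c l) \<omega> ^ 2 * W i (c k) \<omega> ^ 2)"
          using \<open>i = j\<close> by (simp add: fun_eq_iff mult_ac)
        ultimately show ?thesis using wp_cross[OF wp[OF ij(1)] c0[of l] \<open>c l \<le> c k\<close>] False \<open>i = j\<close>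
          by (simp add: c_def min_def power_mult_distrib mult_ac)
      qed
    next
      case False
      then show ?thesis using cross_indep[OF wp assms(3) ij False c0 c0] by simp
    qed
  qed
  have intG: "integrable P G"
    unfolding G_def by (intro Bochner_Integration.integrable_sum wp_mom(1)[OF wp c0]) auto
  have EG: "expectation G = real M * (\<Sum>k<N. c k)"
    unfolding G_def
    by (simp add: Bochner_Integration.integral_sum Bochner_Integration.integrable_sum wp_mom(1)[OF wp c0] wp_mom(2)[OF wp c0])
  have G2: "\<And>\<omega>. G \<omega> ^ 2 = (\<Sum>i<M. \<Sum>j<M. \<Sum>k<N. \<Sum>l<N. W i (c k) \<omega> ^ 2 * W j (c l) \<omega> ^ 2)"
  proof -
    fix \<omega>
    have "G \<omega> ^ 2 = G \<omega> * G \<omega>" by (rule power2_eq_square)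
    also have "\<dots> = (\<Sum>i<M. \<Sum>j<M. \<Sum>k<N. \<Sum>l<N. W i (c k) \<omega> ^ 2 * W j (c l) \<omega> ^ 2)"
      unfolding G_def by (simp add: sum_product)
    finally show "G \<omega> ^ 2 = (\<Sum>i<M. \<Sum>j<M. \<Sum>k<N. \<Sum>l<N. W i (c k) \<omega> ^ 2 * W j (c l) \<omega> ^ 2)" .
  qed
  have intG2: "integrable P (\<lambda>\<omega>. G \<omega> ^ 2)"
    unfolding G2 by (intro Bochner_Integration.integrable_sum intF) auto
  have EG2: "expectation (\<lambda>\<omega>. G \<omega> ^ 2) =
      (\<Sum>i<M. \<Sum>j<M. \<Sum>k<N. \<Sum>l<N. c k * c l + (if i = j then 2 * (h^2 * real (min k l) ^ 2) else 0))"
    unfolding G2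
    by (subst integral_sum4[where f="\<lambda>i j k l \<omega>. W i (c k) \<omega> ^ 2 * W j (c l) \<omega> ^ 2"])
       (auto intro!: sum.cong intF simp: EF)
  also have "\<dots> = real M ^ 2 * (\<Sum>k<N. c k) ^ 2 + real M * (\<Sum>k<N. \<Sum>l<N. 2 * (h^2 * real (min k l) ^ 2))"
    by (rule quad_sum)
  finally have EG2': "expectation (\<lambda>\<omega>. G \<omega> ^ 2) = real M ^ 2 * (\<Sum>k<N. c k) ^ 2 + real M * (\<Sum>k<N. \<Sum>l<N. 2 * (h^2 * real (min k l) ^ 2))" .
  have sc: "(\<Sum>k<N. c k) = h * (real N * (real N - 1) / 2)"
  proof -
    have "(\<Sum>k<N. c k) = h * (\<Sum>k<N. real k)" unfolding c_def by (simp add: sum_distrib_left mult_ac)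
    then show ?thesis using sum_k[of N] by simp
  qed
  have sm: "(\<Sum>k<N. \<Sum>l<N. 2 * (h^2 * real (min k l) ^ 2)) = 2 * h^2 * (real N * (real N - 1) * (real N ^ 2 - real N + 1) / 6)"
    using sum_min2[of N] by (simp add: sum_distrib_left[symmetric] mult_ac)
  have expand: "\<And>\<omega>. (a * G \<omega> - V)\<^sup>2 = a^2 * G \<omega> ^ 2 + (- 2 * a * V) * G \<omega> + V^2"
    by (simp add: power2_eq_square algebra_simps)
  have E: "expectation (\<lambda>\<omega>. (a * G \<omega> - V)\<^sup>2) = a^2 * expectation (\<lambda>\<omega>. G \<omega> ^ 2) + (- 2 * a * V) * expectation G + V^2"
    unfolding expand using intG intG2 by (simp add: Bochner_Integration.integral_add prob_space)
  have T: "T = real N * h" using assms by simp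
  have final: "a^2 * (real M ^ 2 * (h * (real N * (real N - 1) / 2)) ^ 2 + real M * (2 * h^2 * (real N * (real N - 1) * (real N ^ 2 - real N + 1) / 6)))
      + (- 2 * a * V) * (real M * (h * (real N * (real N - 1) / 2))) + V^2
      = \<sigma>^4 * T\<^sup>2 / 4 * h\<^sup>2 + \<sigma>^4 * T^5 / 3 * (1 / (h * real (M * N)))
           + \<sigma>^4 * T\<^sup>2 * (- 2 * T\<^sup>2 + 2 * h * T - h\<^sup>2) / (3 * real (M * N))"
    using Mp hp assms(7) unfolding a_def V_def T
    by (simp add: field_simps) algebra
  show ?thesis
    unfolding Let_def Vhat_eq VT_eq E EG2' EG sm sc final ..
qed

end
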